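(* Consider a run of Algorithm 1 (described in the context) against an adversary making at most $C$ corruptions. The total absolute loss $\sum |f(x_t)-q_t|$ over all rounds $t$ lying in correcting intervals is at most $L\cdot O(C)$, with an absolute constant.
   Context: Problem. Fix $L>0$ and $T\ge 2$. An adversary fixes an unknown $L$-Lipschitz $f:[0,1]\to[0,L]$. In each round $t=1,\dots,T$: the adversary chooses $x_t\in[0,1]$; the learner observes $x_t$ and guesses $q_t$; the adversary observes $q_t$ and sends $\sigma_t\in\{0,1\}$, equal to $\sigma(q_t-f(x_t))$ in uncorrupted rounds and $1-\sigma(q_t-f(x_t))$ in corrupted rounds, where $\sigma(u)=1$ if $u>0$ and $0$ if $u\le 0$; the adversary chooses adaptively which rounds to corrupt, at most $C$ in total ($C$ unknown to the learner). The absolute loss of round $t$ is $|f(x_t)-q_t|$. $\mathtt{len}(I)$ is the length of an interval $I$. $\mathtt{MidpointQuery}(I,Y)$, $Y=[a,b]$: guess $q=(a+b)/2$; if $\sigma_t=1$ return $Y\cap[0,q+L\,\mathtt{len}(I)]$, if $\sigma_t=0$ return $Y\cap[q-L\,\mathtt{len}(I),L]$. Algorithm 1. Maintain a partition of $[0,1]$ into intervals; each $I_j$ carries a checking interval $S_j$, range $Y_j$, and a "dubious" flag (initially unset). Initially: $8$ intervals of length $1/8$ (the root intervals), each with $S_j=Y_j=[0,L]$. In round $t$, with $I_j$ the partition interval containing $x_t$: (i) if some endpoint of $S_j$ has not been guessed in a round whose context lay in $I_j$, guess such an endpoint; if the guess was $\min(S_j)$ with $\sigma_t=1$ or $\max(S_j)$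 with $\sigma_t=0$, mark $I_j$ dubious; once both endpoints have been queried, set $Y_j=[0,L]$ if dubious and otherwise $Y_j=[\min(S_j)-L\,\mathtt{len}(I_j),\max(S_j)+L\,\mathtt{len}(I_j)]\cap[0,L]$. (ii) Otherwise set $Y_j:=\mathtt{MidpointQuery}(I_j,Y_j)$; if then $\mathtt{len}(Y_j)<\max(4L\,\mathtt{len}(I_j),4L/T)$, bisect $I_j$ into its two halves (its children, of which $I_j$ is the parent), which replace it, each with checking interval equal to the current $Y_j$ (endpoints unqueried, not dubious). Interval types. Say a round $t$ lies in $I_j$ if $I_j$ is the partition interval containing $x_t$ at round $t$. An interval $I_j$ is corrupted if some round lying in $I_j$ has a corrupted signal; it is correcting if its parent is corrupted and every round lying in $I_j$ is uncorrupted. *)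

theory Defs
  imports "HOL-Analysis.Analysis"
begin

text \<open>A node (k,i) denotes the dyadic interval [i/2^k, (i+1)/2^k) of [0,1]
  (closed at the right end when it contains 1). Roots are the nodes (3,i), i<8.\<close>

type_synonym node = "nat \<times> nat"

record nst =
  chk :: "real \<times> real"   \<comment> \<open>checking interval S_j = [fst, snd]\<close>
  rng :: "real \<times> real"   \<comment> \<open>range Y_j = [fst, snd]\<close>
  dub :: bool
  qlo :: bool               \<comment> \<open>min S_j already guessed in a round lying in I_j\<close>
  qhi :: bool               \<comment> \<open>max S_j already guessed in a round lying in I_j\<close>

type_synonym alg_state = "node set \<times> (node \<Rightarrow> nst)"

definition ilen :: "node \<Rightarrow> real" where
  "ilen n = 1 / 2 ^ fst n"

definition in_node :: "node \<Rightarrow> real \<Rightarrow> bool" where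
  "in_node n x \<longleftrightarrow>
     (real (snd n) / 2 ^ fst n \<le> x \<and> x < real (snd n + 1) / 2 ^ fst n)
     \<or> (x = 1 \<and> snd n + 1 = 2 ^ fst n)"

definition parent :: "node \<Rightarrow> node" where
  "parent n = (fst n - 1, snd n div 2)"

definition fresh :: "real \<times> real \<Rightarrow> nst" where
  "fresh Y = \<lparr>chk = Y, rng = Y, dub = False, qlo = False, qhi = False\<rparr>"

definition init_state :: "real \<Rightarrow> alg_state" where
  "init_state L = ({(3, i) | i. i < 8}, \<lambda>_. fresh (0, L))"

definition node_of :: "alg_state \<Rightarrow> real \<Rightarrow> node" where
  "node_of st x = (THE n. n \<in> fst st \<and> in_node n x)"

definition guess :: "alg_state \<Rightarrow> node \<Rightarrow> real" where
  "guess st n = (let d = snd st n in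
     if \<not> qlo d then fst (chk d)
     else if \<not> qhi d then snd (chk d)
     else (fst (rng d) + snd (rng d)) / 2)"

definition midpoint_query :: "real \<Rightarrow> real \<Rightarrow> real \<times> real \<Rightarrow> bool \<Rightarrow> real \<times> real" where
  "midpoint_query L l Y s = (let a = fst Y; b = snd Y; q = (a + b) / 2 in
     if s then (max a 0, min b (q + L * l)) else (max a (q - L * l), min b L))"

definition finish_check :: "real \<Rightarrow> real \<Rightarrow> nst \<Rightarrow> nst" where
  "finish_check L l d = (if qlo d \<and> qhi d then
      d\<lparr>rng := (if dub d then (0, L)
                 else (max 0 (fst (chk d) - L * l), min L (snd (chk d) + L * l)))\<rparr>
    else d)"

definition update :: "real \<Rightarrow> nat \<Rightarrow> alg_state \<Rightarrow> node \<Rightarrow> bool \<Rightarrow> alg_state" where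
  "update L T st n s = (let A = fst st; D = snd st; d = D n; l = ilen n in
     if \<not> qlo d then (A, D(n := finish_check L l (d\<lparr>qlo := True, dub := (dub d \<or> s)\<rparr>)))
     else if \<not> qhi d then (A, D(n := finish_check L l (d\<lparr>qhi := True, dub := (dub d \<or> \<not> s)\<rparr>)))
     else (let Y' = midpoint_query L l (rng d) s in
       if snd Y' - fst Y' < max (4 * L * l) (4 * L / real T) then
         ((A - {n}) \<union> {(fst n + 1, 2 * snd n), (fst n + 1, 2 * snd n + 1)},
          D(n := d\<lparr>rng := Y'\<rparr>, (fst n + 1, 2 * snd n) := fresh Y',
            (fst n + 1, 2 * snd n + 1) := fresh Y'))
       else (A, D(n := d\<lparr>rng := Y'\<rparr>))))"

definition signal :: "(real \<Rightarrow> real) \<Rightarrow> real \<Rightarrow> real \<Rightarrow> bool \<Rightarrow> bool" where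
  "signal f x q c = (if c then \<not> (q - f x > 0) else (q - f x > 0))"

fun run :: "real \<Rightarrow> nat \<Rightarrow> (real \<Rightarrow> real) \<Rightarrow> (nat \<Rightarrow> real) \<Rightarrow> (nat \<Rightarrow> bool) \<Rightarrow> nat \<Rightarrow> alg_state" where
  "run L T f xs cs 0 = init_state L"
| "run L T f xs cs (Suc m) =
     (let st = run L T f xs cs m; n = node_of st (xs (Suc m)); q = guess st n in
      update L T st n (signal f (xs (Suc m)) q (cs (Suc m))))"

definition round_node :: "real \<Rightarrow> nat \<Rightarrow> (real \<Rightarrow> real) \<Rightarrow> (nat \<Rightarrow> real) \<Rightarrow> (nat \<Rightarrow> bool) \<Rightarrow> nat \<Rightarrow> node" where
  "round_node L T f xs cs t = node_of (run L T f xs cs (t - 1)) (xs t)"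

definition guess_at :: "real \<Rightarrow> nat \<Rightarrow> (real \<Rightarrow> real) \<Rightarrow> (nat \<Rightarrow> real) \<Rightarrow> (nat \<Rightarrow> bool) \<Rightarrow> nat \<Rightarrow> real" where
  "guess_at L T f xs cs t = guess (run L T f xs cs (t - 1)) (round_node L T f xs cs t)"

definition corrupted_node :: "real \<Rightarrow> nat \<Rightarrow> (real \<Rightarrow> real) \<Rightarrow> (nat \<Rightarrow> real) \<Rightarrow> (nat \<Rightarrow> bool) \<Rightarrow> node \<Rightarrow> bool" where
  "corrupted_node L T f xs cs n \<longleftrightarrow> (\<exists>t\<in>{1..T}. round_node L T f xs cs t = n \<and> cs t)"

definition correcting_node :: "real \<Rightarrow> nat \<Rightarrow> (real \<Rightarrow> real) \<Rightarrow> (nat \<Rightarrow> real) \<Rightarrow> (nat \<Rightarrow> bool) \<Rightarrow> node \<Rightarrow> bool" where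
  "correcting_node L T f xs cs n \<longleftrightarrow> 3 < fst n \<and> corrupted_node L T f xs cs (parent n)
     \<and> (\<forall>t\<in>{1..T}. round_node L T f xs cs t = n \<longrightarrow> \<not> cs t)"

end

theory Submission
  imports Defs
begin

definition c0 :: "node \<Rightarrow> node" where "c0 n = (fst n + 1, 2 * snd n)"
definition c1 :: "node \<Rightarrow> node" where "c1 n = (fst n + 1, 2 * snd n + 1)"

inductive desc :: "node \<Rightarrow> node \<Rightarrow> bool" where
  drefl: "desc n n"
| dc0: "desc a n \<Longrightarrow> desc (c0 a) n"
| dc1: "desc a n \<Longrightarrow> desc (c1 a) n"

definition valid :: "node \<Rightarrow> bool" where "valid n \<longleftrightarrow> snd n < 2 ^ fst n"

definition partn :: "node set \<Rightarrow> bool" where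
  "partn A \<longleftrightarrow> (\<forall>x\<in>{0..1}. \<exists>!a. a \<in> A \<and> in_node a x) \<and> (\<forall>a\<in>A. valid a)"

definition seen :: "node set \<Rightarrow> node \<Rightarrow> bool" where
  "seen A n \<longleftrightarrow> (\<exists>a\<in>A. desc a n)"

lemma in_node_iff: "in_node n x \<longleftrightarrow>
   (real (snd n) \<le> x * 2 ^ fst n \<and> x * 2 ^ fst n < real (snd n) + 1) \<or> (x = 1 \<and> real (snd n) + 1 = 2 ^ fst n)"
proof -
  have pos: "(0::real) < 2 ^ fst n" by simp
  have a: "real (snd n) / 2 ^ fst n \<le> x \<longleftrightarrow> real (snd n) \<le> x * 2 ^ fst n"
    using pos by (simp add: divide_le_eq)
  have b: "x < real (snd n + 1) / 2 ^ fst n \<longleftrightarrow> x * 2 ^ fst n < real (snd n) + 1"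
    using pos by (simp add: less_divide_eq add.commute)
  have c: "snd n + 1 = 2 ^ fst n \<longleftrightarrow> real (snd n) + 1 = 2 ^ fst n"
  proof -
    have "snd n + 1 = 2 ^ fst n \<longleftrightarrow> real (snd n + 1) = real ((2::nat) ^ fst n)" by (simp only: of_nat_eq_iff)
    then show ?thesis by (simp only: of_nat_add of_nat_1 of_nat_power of_nat_numeral)
  qed
  show ?thesis unfolding in_node_def a b c by (metis add.commute)
qed

lemma child_facts:
  fixes n :: node and x :: real
  shows "in_node n x \<longleftrightarrow> (real (snd n) \<le> x*2 ^ fst n \<and> x*2 ^ fst n < real (snd n) + 1) \<or> (x = 1 \<and> real (snd n) + 1 = 2 ^ fst n)"
    and "in_node (c0 n) x \<longleftrightarrow> (2*real (snd n) \<le> 2*(x*2 ^ fst n) \<and> 2*(x*2 ^ fst n) < 2*real (snd n) + 1) \<or> (x = 1 \<and> 2*real (snd n) + 1 = 2*2 ^ fst n)"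
    and "in_node (c1 n) x \<longleftrightarrow> (2*real (snd n)+1 \<le> 2*(x*2 ^ fst n) \<and> 2*(x*2 ^ fst n) < 2*real (snd n) + 1 + 1) \<or> (x = 1 \<and> 2*real (snd n) + 1 + 1 = 2*2 ^ fst n)"
    and "2*real (snd n) + 1 \<noteq> 2*2 ^ fst n"
proof -
  show "in_node n x \<longleftrightarrow> (real (snd n) \<le> x*2 ^ fst n \<and> x*2 ^ fst n < real (snd n) + 1) \<or> (x = 1 \<and> real (snd n) + 1 = 2 ^ fst n)"
    unfolding in_node_iff ..
  have e: "x * 2 ^ fst (c0 n) = 2 * (x * 2 ^ fst n)" "x * 2 ^ fst (c1 n) = 2 * (x * 2 ^ fst n)"
    "(2::real) ^ fst (c0 n) = 2*2 ^ fst n"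
    "(2::real) ^ fst (c1 n) = 2*2 ^ fst n"
    "real (snd (c0 n)) = 2 * real (snd n)" "real (snd (c1 n)) + 1 = 2 * real (snd n) + 2"
    "real (snd (c1 n)) = 2 * real (snd n) + 1"
    by (simp_all add: c0_def c1_def)
  show "in_node (c0 n) x \<longleftrightarrow> (2*real (snd n) \<le> 2*(x*2 ^ fst n) \<and> 2*(x*2 ^ fst n) < 2*real (snd n) + 1) \<or> (x = 1 \<and> 2*real (snd n) + 1 = 2*2 ^ fst n)"
    unfolding in_node_iff unfolding e(1,2) unfolding e(3,4,5,6,7) ..
  show "in_node (c1 n) x \<longleftrightarrow> (2*real (snd n)+1 \<le> 2*(x*2 ^ fst n) \<and> 2*(x*2 ^ fst n) < 2*real (snd n) + 1 + 1) \<or> (x = 1 \<and> 2*real (snd n) + 1 + 1 = 2*2 ^ fst n)"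
    unfolding in_node_iff unfolding e(1,2) unfolding e(3,4,5,6,7) ..
  have p1: "2 * snd n + 1 \<noteq> (2::nat) ^ Suc (fst n)" by (metis dvd_triv_left even_plus_one_iff power_Suc)
  show "2*real (snd n) + 1 \<noteq> 2*2 ^ fst n"
  proof
    assume "2*real (snd n) + 1 = 2*2 ^ fst n"
    then have "real (2 * snd n + 1) = real ((2::nat) ^ Suc (fst n))" by simp
    then have "2 * snd n + 1 = (2::nat) ^ Suc (fst n)" by (simp only: of_nat_eq_iff)
    then show False using p1 by blast
  qed
qed

lemma arith_child:
  fixes r w U x :: real
  assumes "x = 1 \<Longrightarrow> w = U" "2*r+1 \<noteq> 2*U"
  shows "((r \<le> w \<and> w < r+1) \<or> (x=1 \<and> r+1 = U)) \<longleftrightarrow>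
     ((2*r \<le> 2*w \<and> 2*w < 2*r+1) \<or> (x=1 \<and> 2*r+1 = 2*U)) \<or> ((2*r+1 \<le> 2*w \<and> 2*w < 2*r+1+1) \<or> (x=1 \<and> 2*r+1+1 = 2*U))"
    and "\<not> (((2*r \<le> 2*w \<and> 2*w < 2*r+1) \<or> (x=1 \<and> 2*r+1 = 2*U)) \<and> ((2*r+1 \<le> 2*w \<and> 2*w < 2*r+1+1) \<or> (x=1 \<and> 2*r+1+1 = 2*U)))"
  using assms by (smt (verit))+

lemma in_node_child: "in_node n x \<longleftrightarrow> in_node (c0 n) x \<or> in_node (c1 n) x"
proof -
  note cf = child_facts(1-3)[of n x] child_facts(4)[of n]
  have w1: "x = 1 \<Longrightarrow> x * 2 ^ fst n = (2::real) ^ fst n" by simp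
  show ?thesis unfolding cf(1,2,3)
    by (rule arith_child(1)[of x "x * 2 ^ fst n" "2 ^ fst n" "real (snd n)", OF w1 cf(4)])
qed

lemma in_node_child_disj: "\<not> (in_node (c0 n) x \<and> in_node (c1 n) x)"
proof -
  note cf = child_facts(1-3)[of n x] child_facts(4)[of n]
  have w1: "x = 1 \<Longrightarrow> x * 2 ^ fst n = (2::real) ^ fst n" by simp
  show ?thesis unfolding cf(1,2,3)
    by (rule arith_child(2)[of x "x * 2 ^ fst n" "2 ^ fst n" "real (snd n)", OF w1 cf(4)])
qed

lemma desc_in: "desc a n \<Longrightarrow> in_node a x \<Longrightarrow> in_node n x"
proof (induction rule: desc.induct)
  case (drefl n) then show ?case .
next
  case (dc0 a n) then show ?case using in_node_child[of a x] by blast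
next
  case (dc1 a n) then show ?case using in_node_child[of a x] by blast
qed

lemma desc_level: "desc a n \<Longrightarrow> fst n \<le> fst a"
  by (induction rule: desc.induct) (auto simp: c0_def c1_def)

lemma valid_pt: "valid a \<Longrightarrow> in_node a (real (snd a) / 2 ^ fst a) \<and> real (snd a) / 2 ^ fst a \<in> {0..1}"
proof -
  assume "valid a"
  then have "snd a + 1 \<le> 2 ^ fst a" unfolding valid_def by simp
  then have "real (snd a + 1) \<le> real ((2::nat) ^ fst a)" by (simp only: of_nat_le_iff)
  then have v: "real (snd a) + 1 \<le> 2 ^ fst a" by simp
  have pos: "(0::real) < 2 ^ fst a" by simp
  have e: "real (snd a) / 2 ^ fst a * 2 ^ fst a = real (snd a)" using pos by simp
  have "real (snd a) \<le> 2 ^ fst a" using v by linarith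
  then have "real (snd a) / 2 ^ fst a \<le> 1" using divide_le_eq_1_pos[OF pos] by blast
  moreover have "snd a \<le> 2 ^ fst a" using \<open>snd a + 1 \<le> 2 ^ fst a\<close> by simp
  ultimately show ?thesis unfolding in_node_iff e by auto
qed

lemma in_node_dist: "in_node n x \<Longrightarrow> in_node n y \<Longrightarrow> \<bar>x - y\<bar> \<le> ilen n"
proof -
  assume a: "in_node n x" "in_node n y"
  define U :: real where "U = 2 ^ fst n"
  have U: "U > 0" by (simp add: U_def)
  have b: "real (snd n) \<le> z * U \<and> z * U \<le> real (snd n) + 1" if "in_node n z" for z
    using that unfolding in_node_iff U_def[symmetric] by auto
  have "\<bar>x * U - y * U\<bar> \<le> 1" using b[OF a(1)] b[OF a(2)] by linarith
  then have "\<bar>x - y\<bar> * U \<le> 1" using U by (simp add: abs_mult left_diff_distrib[symmetric])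
  then show ?thesis unfolding ilen_def U_def[symmetric] using U by (simp add: le_divide_eq)
qed

lemma desc_c0_inv: "desc (c0 p) n \<Longrightarrow> c0 p = n \<or> desc p n"
  by (cases rule: desc.cases) (auto simp: c0_def c1_def, presburger)

lemma desc_c1_inv: "desc (c1 p) n \<Longrightarrow> c1 p = n \<or> desc p n"
  by (cases rule: desc.cases) (auto simp: c0_def c1_def, presburger)

lemma node_of_prop:
  assumes "partn A" "x \<in> {0..1}"
  shows "node_of (A, D) x \<in> A \<and> in_node (node_of (A, D) x) x"
proof -
  from assms have "\<exists>!a. a \<in> A \<and> in_node a x" unfolding partn_def by blast
  then have "(THE a. a \<in> A \<and> in_node a x) \<in> A \<and> in_node (THE a. a \<in> A \<and> in_node a x) x"
    by (rule theI')
  then show ?thesis unfolding node_of_def by simp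
qed

lemma partn_unique: "partn A \<Longrightarrow> x \<in> {0..1} \<Longrightarrow> a \<in> A \<Longrightarrow> b \<in> A \<Longrightarrow> in_node a x \<Longrightarrow> in_node b x \<Longrightarrow> a = b"
  unfolding partn_def by blast

lemma child_in_parent: "c \<in> {c0 p, c1 p} \<Longrightarrow> in_node c x \<Longrightarrow> in_node p x"
  using in_node_child[of p x] by auto

lemma parent_in_child: "in_node p x \<Longrightarrow> \<exists>c\<in>{c0 p, c1 p}. in_node c x"
  using in_node_child[of p x] by auto

lemma partn_valid: "partn A \<Longrightarrow> a \<in> A \<Longrightarrow> valid a"
  unfolding partn_def by simp

lemma c_ne: "c0 p \<noteq> p" "c1 p \<noteq> p" "c0 p \<noteq> c1 p" "c1 p \<noteq> c0 p"
  by (auto simp: c0_def c1_def prod_eq_iff)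

lemma valid_c: "valid p \<Longrightarrow> valid (c0 p)" "valid p \<Longrightarrow> valid (c1 p)"
  by (auto simp: valid_def c0_def c1_def)

lemma partn_split:
  assumes P: "partn A" and p: "p \<in> A"
  shows "partn (A - {p} \<union> {c0 p, c1 p})"
  unfolding partn_def
proof (intro conjI ballI)
  fix x :: real assume x: "x \<in> {0..1}"
  obtain a where a: "a \<in> A" "in_node a x" using P x unfolding partn_def by blast
  show "\<exists>!a. a \<in> A - {p} \<union> {c0 p, c1 p} \<and> in_node a x"
  proof (cases "a = p")
    case True
    then obtain c where c: "c \<in> {c0 p, c1 p}" "in_node c x" using a parent_in_child by blast
    show ?thesis
    proof (rule ex1I[of _ c])
      show "c \<in> A - {p} \<union> {c0 p, c1 p} \<and> in_node c x" using c by blast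
    next
      fix b assume b: "b \<in> A - {p} \<union> {c0 p, c1 p} \<and> in_node b x"
      show "b = c"
      proof (cases "b \<in> {c0 p, c1 p}")
        case True
        then show ?thesis using c b in_node_child_disj[of p x] by auto
      next
        case False
        then have "b \<in> A" "b \<noteq> p" using b by auto
        then show ?thesis using partn_unique[OF P x _ p] b a True by blast
      qed
    qed
  next
    case False
    show ?thesis
    proof (rule ex1I[of _ a])
      show "a \<in> A - {p} \<union> {c0 p, c1 p} \<and> in_node a x" using a False by blast
    next
      fix b assume b: "b \<in> A - {p} \<union> {c0 p, c1 p} \<and> in_node b x"
      show "b = a"
      proof (cases "b \<in> {c0 p, c1 p}")
        case True
        then have "in_node p x" using b child_in_parent by blast
        then have "p = a" using partn_unique[OF P x p a(1)] a by blast
        then show ?thesis using False by blast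
      next
        case False
        then show ?thesis using partn_unique[OF P x _ a(1)] b a by blast
      qed
    qed
  qed
next
  fix a assume "a \<in> A - {p} \<union> {c0 p, c1 p}"
  then show "valid a" using partn_valid[OF P] p valid_c by blast
qed

lemma unseen_child:
  assumes P: "partn A" and p: "p \<in> A" and c: "c = c0 p \<or> c = c1 p"
  shows "\<not> seen A c"
proof
  assume "seen A c"
  then obtain a where a: "a \<in> A" "desc a c" unfolding seen_def by blast
  have v: "valid a" using partn_valid[OF P a(1)] .
  define x where "x = real (snd a) / 2 ^ fst a"
  have x: "in_node a x" "x \<in> {0..1}" using valid_pt[OF v] x_def by auto
  have "in_node c x" using desc_in[OF a(2) x(1)] .
  then have "in_node p x" using c child_in_parent by blast
  then have "a = p" using partn_unique[OF P x(2) a(1) p x(1)] by blast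
  moreover have "fst c \<le> fst a" using desc_level[OF a(2)] .
  moreover have "fst c = fst p + 1" using c by (auto simp: c0_def c1_def)
  ultimately show False by (simp add: prod_eq_iff)
qed

lemma seen_mono_split: "seen A n \<Longrightarrow> seen (A - {p} \<union> {c0 p, c1 p}) n"
proof -
  assume "seen A n"
  then obtain a where a: "a \<in> A" "desc a n" unfolding seen_def by blast
  show ?thesis
  proof (cases "a = p")
    case True
    then have "desc (c0 p) n" using a(2) dc0 by simp
    moreover have "c0 p \<in> A - {p} \<union> {c0 p, c1 p}" by simp
    ultimately show ?thesis unfolding seen_def by blast
  next
    case False
    then have "a \<in> A - {p} \<union> {c0 p, c1 p}" using a by simp
    then show ?thesis unfolding seen_def using a(2) by blast
  qed
qed

lemma seen_split_other:
  assumes "seen (A - {p} \<union> {c0 p, c1 p}) n" "n \<noteq> c0 p" "n \<noteq> c1 p" "p \<in> A"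
  shows "seen A n"
proof -
  from assms(1) obtain a where a: "a \<in> A - {p} \<union> {c0 p, c1 p}" "desc a n" unfolding seen_def by blast
  show ?thesis
  proof (cases "a \<in> A")
    case True then show ?thesis using a seen_def by blast
  next
    case False
    then have "a = c0 p \<or> a = c1 p" using a by auto
    then have "desc p n"
    proof
      assume e: "a = c0 p" show ?thesis using desc_c0_inv[OF a(2)[unfolded e]] assms(2) by simp
    next
      assume e: "a = c1 p" show ?thesis using desc_c1_inv[OF a(2)[unfolded e]] assms(3) by simp
    qed
    then show ?thesis using assms(4) seen_def by blast
  qed
qed

definition inb :: "real \<Rightarrow> real \<times> real \<Rightarrow> bool" where
  "inb L Y \<longleftrightarrow> 0 \<le> fst Y \<and> fst Y \<le> L \<and> 0 \<le> snd Y \<and> snd Y \<le> L"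

definition bnds :: "real \<Rightarrow> (node \<Rightarrow> nst) \<Rightarrow> bool" where
  "bnds L D \<longleftrightarrow> (\<forall>n. inb L (chk (D n)) \<and> inb L (rng (D n)))"

lemma update_cases:
  fixes L :: real and T :: nat and A D n s
  defines "Y' \<equiv> midpoint_query L (ilen n) (rng (D n)) s"
  obtains (lo) "\<not> qlo (D n)"
    "update L T (A, D) n s = (A, D(n := finish_check L (ilen n) ((D n)\<lparr>qlo := True, dub := (dub (D n) \<or> s)\<rparr>)))"
  | (hi) "qlo (D n)" "\<not> qhi (D n)"
    "update L T (A, D) n s = (A, D(n := finish_check L (ilen n) ((D n)\<lparr>qhi := True, dub := (dub (D n) \<or> \<not> s)\<rparr>)))"
  | (sp) "qlo (D n)" "qhi (D n)" "snd Y' - fst Y' < max (4 * L * ilen n) (4 * L / real T)"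
    "update L T (A, D) n s = (A - {n} \<union> {c0 n, c1 n}, D(n := (D n)\<lparr>rng := Y'\<rparr>, c0 n := fresh Y', c1 n := fresh Y'))"
  | (ns) "qlo (D n)" "qhi (D n)" "\<not> snd Y' - fst Y' < max (4 * L * ilen n) (4 * L / real T)"
    "update L T (A, D) n s = (A, D(n := (D n)\<lparr>rng := Y'\<rparr>))"
proof -
  consider "\<not> qlo (D n)" | "qlo (D n)" "\<not> qhi (D n)"
    | "qlo (D n)" "qhi (D n)" "snd Y' - fst Y' < max (4 * L * ilen n) (4 * L / real T)"
    | "qlo (D n)" "qhi (D n)" "\<not> snd Y' - fst Y' < max (4 * L * ilen n) (4 * L / real T)" by blast
  then show ?thesis
  proof cases
    case 1 then show ?thesis using lo by (simp add: update_def Let_def)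
  next
    case 2 then show ?thesis using hi by (simp add: update_def Let_def)
  next
    case 3 then show ?thesis using sp unfolding Y'_def by (simp add: update_def Let_def c0_def c1_def)
  next
    case 4 then show ?thesis using ns unfolding Y'_def by (simp add: update_def Let_def)
  qed
qed

lemma inb_mq: assumes "L \<ge> 0" "l \<ge> 0" "inb L Y" shows "inb L (midpoint_query L l Y s)"
proof -
  define c where "c = L * l"
  have "c \<ge> 0" using assms by (simp add: c_def)
  then show ?thesis using assms unfolding inb_def midpoint_query_def Let_def c_def[symmetric] by (auto simp: field_simps)
qed

lemma finish_chk [simp]: "chk (finish_check L l d) = chk d" "qlo (finish_check L l d) = qlo d"
  "qhi (finish_check L l d) = qhi d" "dub (finish_check L l d) = dub d"
  by (simp_all add: finish_check_def)

lemma inb_finish: assumes "L \<ge> 0" "l \<ge> 0" "inb L (chk d)" "inb L (rng d)" shows "inb L (rng (finish_check L l d))"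
proof -
  define c where "c = L * l"
  have "c \<ge> 0" using assms by (simp add: c_def)
  then show ?thesis using assms unfolding inb_def finish_check_def c_def[symmetric] by (auto simp: field_simps)
qed

lemma ilen_nonneg: "ilen n \<ge> 0" by (simp add: ilen_def)

lemma bnds_update:
  assumes L: "L \<ge> 0" and B: "bnds L D"
  shows "bnds L (snd (update L T (A, D) n s))"
proof -
  have bn: "inb L (chk (D m))" "inb L (rng (D m))" for m using B unfolding bnds_def by blast+
  note il = ilen_nonneg[of n]
  show ?thesis
  proof (cases rule: update_cases[of D n L T A s])
    case lo
    then show ?thesis using bn inb_finish[OF L il] unfolding bnds_def by auto
  next
    case hi
    then show ?thesis using bn inb_finish[OF L il] unfolding bnds_def by auto
  next
    case sp
    then show ?thesis using bn inb_mq[OF L il] unfolding bnds_def by (auto simp: fresh_def)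
  next
    case ns
    then show ?thesis using bn inb_mq[OF L il] unfolding bnds_def by auto
  qed
qed

lemma partn_update:
  assumes P: "partn A" and n: "n \<in> A"
  shows "partn (fst (update L T (A, D) n s))"
proof (cases rule: update_cases[of D n L T A s])
  case sp then show ?thesis using partn_split[OF P n] by simp
qed (simp_all add: P)

lemma partn_top: "partn {(0, 0)}"
  unfolding partn_def valid_def in_node_def by auto

lemma roots_eq: "{(3::nat, i) | i::nat. i < 8} =
  ((({(0,0)} - {(0,0)} \<union> {c0 (0,0), c1 (0,0)}) - {(1,0)} \<union> {c0 (1,0), c1 (1,0)} - {(1,1)} \<union> {c0 (1,1), c1 (1,1)})
   - {(2,0)} \<union> {c0 (2,0), c1 (2,0)} - {(2,1)} \<union> {c0 (2,1), c1 (2,1)} - {(2,2)} \<union> {c0 (2,2), c1 (2,2)}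
   - {(2,3)} \<union> {c0 (2,3), c1 (2,3)})" (is "?L = ?R")
proof -
  have r: "?R = {(3,6),(3,7),(3,4),(3,5),(3,2),(3,3),(3,0),(3,1)}"
    by (simp add: c0_def c1_def insert_Diff_if)
  have "(3, i) \<in> ?R" if "i < 8" for i
  proof -
    have "i = 0 \<or> i = 1 \<or> i = 2 \<or> i = 3 \<or> i = 4 \<or> i = 5 \<or> i = 6 \<or> i = 7" using that by linarith
    then show ?thesis unfolding r by (elim disjE) simp_all
  qed
  note h = this
  have s1: "?L \<subseteq> ?R"
  proof (rule subsetI)
    fix x assume "x \<in> ?L"
    then obtain i where "x = (3, i)" "i < 8" by blast
    then show "x \<in> ?R" using h by simp
  qed
  have "\<forall>x\<in>?R. x \<in> ?L" unfolding r by simp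
  then have s2: "?R \<subseteq> ?L" unfolding subset_eq .
  show ?thesis using s1 s2 by (rule subset_antisym)
qed

lemma partn_init: "partn (fst (init_state L))"
proof -
  have p1: "partn ({(0,0)} - {(0,0)} \<union> {c0 (0,0), c1 (0,0)})" by (rule partn_split[OF partn_top]) simp
  have p2: "partn (({(0,0)} - {(0,0)} \<union> {c0 (0,0), c1 (0,0)}) - {(1,0)} \<union> {c0 (1,0), c1 (1,0)})"
    by (rule partn_split[OF p1]) (simp add: c0_def c1_def)
  have p3: "partn (({(0,0)} - {(0,0)} \<union> {c0 (0,0), c1 (0,0)}) - {(1,0)} \<union> {c0 (1,0), c1 (1,0)} - {(1,1)} \<union> {c0 (1,1), c1 (1,1)})"
    by (rule partn_split[OF p2]) (simp add: c0_def c1_def)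
  have p4: "partn ((({(0,0)} - {(0,0)} \<union> {c0 (0,0), c1 (0,0)}) - {(1,0)} \<union> {c0 (1,0), c1 (1,0)} - {(1,1)} \<union> {c0 (1,1), c1 (1,1)})
   - {(2,0)} \<union> {c0 (2,0), c1 (2,0)})"
    by (rule partn_split[OF p3]) (simp add: c0_def c1_def)
  have p5: "partn ((({(0,0)} - {(0,0)} \<union> {c0 (0,0), c1 (0,0)}) - {(1,0)} \<union> {c0 (1,0), c1 (1,0)} - {(1,1)} \<union> {c0 (1,1), c1 (1,1)})
   - {(2,0)} \<union> {c0 (2,0), c1 (2,0)} - {(2,1)} \<union> {c0 (2,1), c1 (2,1)})"
    by (rule partn_split[OF p4]) (simp add: c0_def c1_def)
  have p6: "partn ((({(0,0)} - {(0,0)} \<union> {c0 (0,0), c1 (0,0)}) - {(1,0)} \<union> {c0 (1,0), c1 (1,0)} - {(1,1)} \<union> {c0 (1,1), c1 (1,1)})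
   - {(2,0)} \<union> {c0 (2,0), c1 (2,0)} - {(2,1)} \<union> {c0 (2,1), c1 (2,1)} - {(2,2)} \<union> {c0 (2,2), c1 (2,2)})"
    by (rule partn_split[OF p5]) (simp add: c0_def c1_def)
  have p7: "partn ((({(0,0)} - {(0,0)} \<union> {c0 (0,0), c1 (0,0)}) - {(1,0)} \<union> {c0 (1,0), c1 (1,0)} - {(1,1)} \<union> {c0 (1,1), c1 (1,1)})
   - {(2,0)} \<union> {c0 (2,0), c1 (2,0)} - {(2,1)} \<union> {c0 (2,1), c1 (2,1)} - {(2,2)} \<union> {c0 (2,2), c1 (2,2)}
   - {(2,3)} \<union> {c0 (2,3), c1 (2,3)})"
    by (rule partn_split[OF p6]) (simp add: c0_def c1_def)
  show ?thesis using p7 unfolding init_state_def fst_conv roots_eq .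
qed

lemma bnds_init: "L \<ge> 0 \<Longrightarrow> bnds L (snd (init_state L))"
  by (simp add: bnds_def init_state_def fresh_def inb_def)

lemma run_Suc: "run L T f xs cs (Suc m) = update L T (run L T f xs cs m) (node_of (run L T f xs cs m) (xs (Suc m)))
   (signal f (xs (Suc m)) (guess (run L T f xs cs m) (node_of (run L T f xs cs m) (xs (Suc m)))) (cs (Suc m)))"
  by (simp add: Let_def)

lemma run_inv:
  assumes L: "L \<ge> 0" and X: "\<forall>t\<in>{1..T}. xs t \<in> {0..1}"
  shows "m \<le> T \<Longrightarrow> partn (fst (run L T f xs cs m)) \<and> bnds L (snd (run L T f xs cs m))"
proof (induction m)
  case 0 then show ?case using partn_init bnds_init[OF L] by simp
next
  case (Suc m)
  obtain A D where st: "run L T f xs cs m = (A, D)" by fastforce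
  have P: "partn A" and B: "bnds L D" using Suc st by auto
  have x: "xs (Suc m) \<in> {0..1}" using X Suc.prems by auto
  have n: "node_of (A, D) (xs (Suc m)) \<in> A" using node_of_prop[OF P x] by blast
  show ?case unfolding run_Suc st using partn_update[OF P n] bnds_update[OF L B] by blast
qed

definition phi :: "real \<Rightarrow> nst \<Rightarrow> real" where
  "phi L d = (if qlo d then 0 else L) + (if qhi d then 0 else L)
     + 3/2 * (if qlo d \<and> qhi d then max 0 (snd (rng d) - fst (rng d)) else L)"

definition Phi :: "real \<Rightarrow> node \<Rightarrow> alg_state \<Rightarrow> real" where
  "Phi L n st = (if n \<in> fst st then phi L (snd st n) else if seen (fst st) n then 0 else 7/2 * L)"

definition sem :: "real \<Rightarrow> (real \<Rightarrow> real) \<Rightarrow> node \<Rightarrow> nst \<Rightarrow> bool" where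
  "sem L f n d \<longleftrightarrow>
     (qlo d \<and> \<not> dub d \<longrightarrow> (\<forall>y\<in>{0..1}. in_node n y \<longrightarrow> fst (chk d) - L * ilen n \<le> f y))
   \<and> (qhi d \<and> \<not> dub d \<longrightarrow> (\<forall>y\<in>{0..1}. in_node n y \<longrightarrow> f y \<le> snd (chk d) + L * ilen n))
   \<and> (qlo d \<and> qhi d \<longrightarrow> (\<forall>y\<in>{0..1}. in_node n y \<longrightarrow> fst (rng d) \<le> f y \<and> f y \<le> snd (rng d)))"

lemma sem_fresh: "sem L f n (fresh Y)" by (simp add: sem_def fresh_def)
lemma phi_fresh: "phi L (fresh Y) = 7/2 * L" by (simp add: phi_def fresh_def)
lemma phi_nonneg: "L \<ge> 0 \<Longrightarrow> phi L d \<ge> 0" by (simp add: phi_def)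

lemma Phi_nonneg: "L \<ge> 0 \<Longrightarrow> Phi L n st \<ge> 0" by (simp add: Phi_def phi_nonneg)

lemma guess_simps:
  "\<not> qlo (D n) \<Longrightarrow> guess (A, D) n = fst (chk (D n))"
  "qlo (D n) \<Longrightarrow> \<not> qhi (D n) \<Longrightarrow> guess (A, D) n = snd (chk (D n))"
  "qlo (D n) \<Longrightarrow> qhi (D n) \<Longrightarrow> guess (A, D) n = (fst (rng (D n)) + snd (rng (D n))) / 2"
  by (simp_all add: guess_def Let_def)

lemma mq_len:
  assumes "a \<le> b" "l \<ge> 0"
  shows "snd (midpoint_query L l (a, b) s) - fst (midpoint_query L l (a, b) s) \<le> (b - a) / 2 + L * l"
proof -
  define c where "c = L * l"
  define q where "q = (a + b) / 2"
  have m: "min b (q + c) \<le> q + c" "a \<le> max a 0" "min b L \<le> b" "q - c \<le> max a (q - c)" by auto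
  show ?thesis
  proof (cases s)
    case True
    then have e: "midpoint_query L l (a,b) s = (max a 0, min b (q + c))"
      by (simp add: midpoint_query_def Let_def c_def q_def)
    have g: "\<And>u v. u \<le> (a + b) / 2 + c \<Longrightarrow> a \<le> v \<Longrightarrow> u - v \<le> (b - a) / 2 + c" by (simp add: field_simps)
    show ?thesis unfolding e fst_conv snd_conv c_def[symmetric] using g m(1,2) unfolding q_def by blast
  next
    case False
    then have e: "midpoint_query L l (a,b) s = (max a (q - c), min b L)"
      by (simp add: midpoint_query_def Let_def c_def q_def)
    have g: "\<And>u v. u \<le> b \<Longrightarrow> (a + b) / 2 - c \<le> v \<Longrightarrow> u - v \<le> (b - a) / 2 + c" by (simp add: field_simps)
    show ?thesis unfolding e fst_conv snd_conv c_def[symmetric] using g m(3,4) unfolding q_def by blast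
  qed
qed


lemma mq_sem:
  assumes Y: "\<forall>y\<in>{0..1}. in_node n y \<longrightarrow> a \<le> f y \<and> f y \<le> b"
    and x: "x \<in> {0..1}" "in_node n x"
    and LIP: "\<And>y z. y\<in>{0..1} \<Longrightarrow> z\<in>{0..1} \<Longrightarrow> in_node n y \<Longrightarrow> in_node n z \<Longrightarrow> \<bar>f y - f z\<bar> \<le> L * ilen n"
    and RNG: "\<And>y. y \<in> {0..1} \<Longrightarrow> 0 \<le> f y \<and> f y \<le> L"
    and s: "s = (q - f x > 0)" and q: "q = (a + b) / 2"
  shows "\<forall>y\<in>{0..1}. in_node n y \<longrightarrow> fst (midpoint_query L (ilen n) (a, b) s) \<le> f y \<and> f y \<le> snd (midpoint_query L (ilen n) (a, b) s)"
proof (intro ballI impI)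
  fix y assume y: "y \<in> {0..1}" "in_node n y"
  have l: "\<bar>f x - f y\<bar> \<le> L * ilen n" using LIP[OF x(1) y(1) x(2) y(2)] .
  have r: "0 \<le> f y \<and> f y \<le> L" using RNG[OF y(1)] .
  have ab: "a \<le> f y \<and> f y \<le> b" using Y y by blast
  define c where "c = L * ilen n"
  have l': "f x - c \<le> f y" "f y \<le> f x + c" using l unfolding c_def by (simp_all add: abs_le_iff)
  show "fst (midpoint_query L (ilen n) (a, b) s) \<le> f y \<and> f y \<le> snd (midpoint_query L (ilen n) (a, b) s)"
  proof (cases s)
    case True
    then have e: "midpoint_query L (ilen n) (a,b) s = (max a 0, min b (q + c))"
      by (simp add: midpoint_query_def Let_def c_def q)
    have "q > f x" using True s by simp
    then show ?thesis unfolding e fst_conv snd_conv using ab r l' by simp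
  next
    case False
    then have e: "midpoint_query L (ilen n) (a,b) s = (max a (q - c), min b L)"
      by (simp add: midpoint_query_def Let_def c_def q)
    have "q \<le> f x" using False s by simp
    then show ?thesis unfolding e fst_conv snd_conv using ab r l' by simp
  qed
qed

lemma sem_I:
  assumes "qlo d \<and> \<not> dub d \<Longrightarrow> (\<forall>y\<in>{0..1}. in_node n y \<longrightarrow> fst (chk d) - L * ilen n \<le> f y)"
    and "qhi d \<and> \<not> dub d \<Longrightarrow> (\<forall>y\<in>{0..1}. in_node n y \<longrightarrow> f y \<le> snd (chk d) + L * ilen n)"
    and "qlo d \<and> qhi d \<Longrightarrow> (\<forall>y\<in>{0..1}. in_node n y \<longrightarrow> fst (rng d) \<le> f y \<and> f y \<le> snd (rng d))"
  shows "sem L f n d"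
  using assms unfolding sem_def by blast

lemma semD:
  assumes "sem L f n d"
  shows "qlo d \<Longrightarrow> \<not> dub d \<Longrightarrow> y\<in>{0..1} \<Longrightarrow> in_node n y \<Longrightarrow> fst (chk d) - L * ilen n \<le> f y"
    and "qhi d \<Longrightarrow> \<not> dub d \<Longrightarrow> y\<in>{0..1} \<Longrightarrow> in_node n y \<Longrightarrow> f y \<le> snd (chk d) + L * ilen n"
    and "qlo d \<Longrightarrow> qhi d \<Longrightarrow> y\<in>{0..1} \<Longrightarrow> in_node n y \<Longrightarrow> fst (rng d) \<le> f y \<and> f y \<le> snd (rng d)"
  using assms unfolding sem_def by blast+

lemma finish_rng:
  "qlo d \<Longrightarrow> qhi d \<Longrightarrow> rng (finish_check L l d) = (if dub d then (0, L)
                 else (max 0 (fst (chk d) - L * l), min L (snd (chk d) + L * l)))"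
  "\<not> (qlo d \<and> qhi d) \<Longrightarrow> rng (finish_check L l d) = rng d"
  by (auto simp: finish_check_def)


lemma len_arith: "(u::real) \<le> w / 2 + c \<Longrightarrow> 4 * c \<le> u \<Longrightarrow> u \<le> 2/3 * w"
  by linarith

lemma round_in:
  assumes L: "L \<ge> 0" and n: "n \<in> A" and x: "x \<in> {0..1}" "in_node n x"
    and B: "bnds L D" and S: "sem L f n (D n)"
    and LIP: "\<And>y z. y\<in>{0..1} \<Longrightarrow> z\<in>{0..1} \<Longrightarrow> in_node n y \<Longrightarrow> in_node n z \<Longrightarrow> \<bar>f y - f z\<bar> \<le> L * ilen n"
    and RNG: "\<And>y. y \<in> {0..1} \<Longrightarrow> 0 \<le> f y \<and> f y \<le> L"
    and q: "q = guess (A, D) n" and s: "s = (q - f x > 0)"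
  shows "\<bar>f x - q\<bar> + Phi L n (update L T (A, D) n s) \<le> phi L (D n) \<and>
         (n \<in> fst (update L T (A, D) n s) \<longrightarrow> sem L f n (snd (update L T (A, D) n s) n))"
proof -
  have bc: "inb L (chk (D n))" and br: "inb L (rng (D n))" using B unfolding bnds_def by blast+
  have fx: "0 \<le> f x \<and> f x \<le> L" using RNG x(1) .
  note il = ilen_nonneg[of n]
  have lipx: "f x - L * ilen n \<le> f y \<and> f y \<le> f x + L * ilen n" if "y \<in> {0..1}" "in_node n y" for y
    using LIP[OF x(1) that(1) x(2) that(2)] by (simp add: abs_le_iff)
  show ?thesis
  proof (cases rule: update_cases[of D n L T A s])
    case lo
    define d' where "d' = finish_check L (ilen n) ((D n)\<lparr>qlo := True, dub := (dub (D n) \<or> s)\<rparr>)"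
    have U: "update L T (A, D) n s = (A, D(n := d'))" using lo(2) d'_def by simp
    have q1: "q = fst (chk (D n))" using q lo(1) guess_simps(1) by simp
    have loss: "\<bar>f x - q\<bar> \<le> L" using bc fx q1 unfolding inb_def by (simp add: abs_le_iff)
    have rb: "inb L (rng d')" unfolding d'_def using inb_finish[OF L il] bc br by simp
    have d'f: "qlo d'" "qhi d' = qhi (D n)" "dub d' = (dub (D n) \<or> s)" "chk d' = chk (D n)"
      by (simp_all add: d'_def)
    have phiD: "phi L (D n) = L + (if qhi (D n) then 0 else L) + 3/2 * L" using lo(1) by (simp add: phi_def)
    have "max 0 (snd (rng d') - fst (rng d')) \<le> L" using rb L unfolding inb_def by simp
    then have phi': "phi L d' \<le> (if qhi (D n) then 0 else L) + 3/2 * L" using d'f L by (simp add: phi_def)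
    have Phi': "Phi L n (update L T (A, D) n s) = phi L d'" unfolding U Phi_def using n by simp
    have S1: "\<forall>y\<in>{0..1}. in_node n y \<longrightarrow> fst (chk d') - L * ilen n \<le> f y" if "\<not> dub d'"
    proof -
      have "\<not> s" using that d'f by simp
      then have "q \<le> f x" using s by simp
      then show ?thesis using lipx d'f q1 by force
    qed
    have S2: "\<forall>y\<in>{0..1}. in_node n y \<longrightarrow> f y \<le> snd (chk d') + L * ilen n" if "qhi d'" "\<not> dub d'"
      using that d'f semD(2)[OF S] by auto
    have sem': "sem L f n d'"
    proof (rule sem_I)
      show "qlo d' \<and> \<not> dub d' \<Longrightarrow> \<forall>y\<in>{0..1}. in_node n y \<longrightarrow> fst (chk d') - L * ilen n \<le> f y"
        using S1 by blast
      show "qhi d' \<and> \<not> dub d' \<Longrightarrow> \<forall>y\<in>{0..1}. in_node n y \<longrightarrow> f y \<le> snd (chk d') + L * ilen n"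
        using S2 by blast
      show "qlo d' \<and> qhi d' \<Longrightarrow> \<forall>y\<in>{0..1}. in_node n y \<longrightarrow> fst (rng d') \<le> f y \<and> f y \<le> snd (rng d')"
      proof (intro impI ballI)
        fix y assume h: "qlo d' \<and> qhi d'" and y: "y \<in> {0..1}" "in_node n y"
        have r: "rng d' = (if dub d' then (0, L)
                 else (max 0 (fst (chk d') - L * ilen n), min L (snd (chk d') + L * ilen n)))"
          unfolding d'_def using h d'f by (simp add: finish_rng(1) d'_def)
        show "fst (rng d') \<le> f y \<and> f y \<le> snd (rng d')"
        proof (cases "dub d'")
          case True then show ?thesis using r RNG[OF y(1)] by simp
        next
          case False
          have "fst (chk d') - L * ilen n \<le> f y" using S1 False y by blast
          moreover have "f y \<le> snd (chk d') + L * ilen n" using S2 False y h by blast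
          ultimately show ?thesis using r False RNG[OF y(1)] by simp
        qed
      qed
    qed
    show ?thesis using loss phi' phiD Phi' sem' U by simp
  next
    case hi
    define d' where "d' = finish_check L (ilen n) ((D n)\<lparr>qhi := True, dub := (dub (D n) \<or> \<not> s)\<rparr>)"
    have U: "update L T (A, D) n s = (A, D(n := d'))" using hi(3) d'_def by simp
    have q1: "q = snd (chk (D n))" using q hi(1,2) guess_simps(2) by simp
    have loss: "\<bar>f x - q\<bar> \<le> L" using bc fx q1 unfolding inb_def by (simp add: abs_le_iff)
    have rb: "inb L (rng d')" unfolding d'_def using inb_finish[OF L il] bc br by simp
    have d'f: "qlo d'" "qhi d'" "dub d' = (dub (D n) \<or> \<not> s)" "chk d' = chk (D n)"
      using hi(1) by (simp_all add: d'_def)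
    have phiD: "phi L (D n) = L + 3/2 * L" using hi(1,2) by (simp add: phi_def)
    have "max 0 (snd (rng d') - fst (rng d')) \<le> L" using rb L unfolding inb_def by simp
    then have phi': "phi L d' \<le> 3/2 * L" using d'f L by (simp add: phi_def)
    have Phi': "Phi L n (update L T (A, D) n s) = phi L d'" unfolding U Phi_def using n by simp
    have S2: "\<forall>y\<in>{0..1}. in_node n y \<longrightarrow> f y \<le> snd (chk d') + L * ilen n" if "\<not> dub d'"
    proof -
      have "s" using that d'f by simp
      then have "q > f x" using s by simp
      then show ?thesis using lipx d'f q1 by force
    qed
    have S1: "\<forall>y\<in>{0..1}. in_node n y \<longrightarrow> fst (chk d') - L * ilen n \<le> f y" if "\<not> dub d'"
      using that d'f semD(1)[OF S] hi(1) by auto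
    have sem': "sem L f n d'"
    proof (rule sem_I)
      show "qlo d' \<and> \<not> dub d' \<Longrightarrow> \<forall>y\<in>{0..1}. in_node n y \<longrightarrow> fst (chk d') - L * ilen n \<le> f y"
        using S1 by blast
      show "qhi d' \<and> \<not> dub d' \<Longrightarrow> \<forall>y\<in>{0..1}. in_node n y \<longrightarrow> f y \<le> snd (chk d') + L * ilen n"
        using S2 by blast
      show "qlo d' \<and> qhi d' \<Longrightarrow> \<forall>y\<in>{0..1}. in_node n y \<longrightarrow> fst (rng d') \<le> f y \<and> f y \<le> snd (rng d')"
      proof (intro impI ballI)
        fix y assume h: "qlo d' \<and> qhi d'" and y: "y \<in> {0..1}" "in_node n y"
        have r: "rng d' = (if dub d' then (0, L)
                 else (max 0 (fst (chk d') - L * ilen n), min L (snd (chk d') + L * ilen n)))"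
          unfolding d'_def using h d'f hi(1) by (simp add: finish_rng(1) d'_def)
        show "fst (rng d') \<le> f y \<and> f y \<le> snd (rng d')"
        proof (cases "dub d'")
          case True then show ?thesis using r RNG[OF y(1)] by simp
        next
          case False
          have "fst (chk d') - L * ilen n \<le> f y" using S1 False y by blast
          moreover have "f y \<le> snd (chk d') + L * ilen n" using S2 False y h by blast
          ultimately show ?thesis using r False RNG[OF y(1)] by simp
        qed
      qed
    qed
    show ?thesis using loss phi' phiD Phi' sem' U by simp
  next
    case sp
    define Y' where "Y' = midpoint_query L (ilen n) (rng (D n)) s"
    obtain a b where ab: "rng (D n) = (a, b)" by fastforce
    have q1: "q = (a + b) / 2" using q sp(1,2) guess_simps(3) ab by simp
    have fab: "a \<le> f x \<and> f x \<le> b" using semD(3)[OF S sp(1,2) x] ab by simp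
    have loss: "\<bar>f x - q\<bar> \<le> (b - a) / 2" using fab unfolding q1 abs_le_iff by (auto simp: field_simps)
    have phiD: "phi L (D n) = 3/2 * (b - a)" using sp(1,2) fab ab by (simp add: phi_def)
    have U: "fst (update L T (A, D) n s) = A - {n} \<union> {c0 n, c1 n}" using sp(4) by simp
    have nA: "n \<notin> A - {n} \<union> {c0 n, c1 n}" using c_ne(1,2)[of n] by auto
    have sn: "seen (A - {n} \<union> {c0 n, c1 n}) n" unfolding seen_def using dc0[OF drefl, of n] by blast
    have Phi': "Phi L n (update L T (A, D) n s) = 0" unfolding Phi_def U using nA sn by simp
    show ?thesis using loss phiD Phi' U nA fab by simp
  next
    case ns
    define Y' where "Y' = midpoint_query L (ilen n) (rng (D n)) s"
    obtain a b where ab: "rng (D n) = (a, b)" by fastforce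
    have q1: "q = (a + b) / 2" using q ns(1,2) guess_simps(3) ab by simp
    have fab: "a \<le> f x \<and> f x \<le> b" using semD(3)[OF S ns(1,2) x] ab by simp
    have loss: "\<bar>f x - q\<bar> \<le> (b - a) / 2" using fab unfolding q1 abs_le_iff by (auto simp: field_simps)
    have phiD: "phi L (D n) = 3/2 * (b - a)" using ns(1,2) fab ab by (simp add: phi_def)
    have U: "update L T (A, D) n s = (A, D(n := (D n)\<lparr>rng := Y'\<rparr>))" using ns(4) Y'_def by simp
    have len1: "snd Y' - fst Y' \<le> (b - a) / 2 + L * ilen n" unfolding Y'_def ab
      using mq_len[of a b "ilen n" L s] fab il by linarith
    have len2: "snd Y' - fst Y' \<ge> 4 * L * ilen n" using ns(3) Y'_def by simp
    have len2': "4 * (L * ilen n) \<le> snd Y' - fst Y'" using len2 by (simp add: mult.assoc)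
    have len3: "snd Y' - fst Y' \<le> 2/3 * (b - a)" using len_arith[OF len1 len2'] .
    have "0 \<le> 4 * (L * ilen n)" using L il by simp
    then have len4: "snd Y' - fst Y' \<ge> 0" using len2' by linarith
    have phi': "phi L ((D n)\<lparr>rng := Y'\<rparr>) = 3/2 * (snd Y' - fst Y')" using ns(1,2) len4 by (simp add: phi_def)
    have Phi': "Phi L n (update L T (A, D) n s) = 3/2 * (snd Y' - fst Y')" unfolding U Phi_def using n phi' by simp
    have hY: "\<forall>y\<in>{0..1}. in_node n y \<longrightarrow> a \<le> f y \<and> f y \<le> b" using semD(3)[OF S ns(1,2)] ab by simp
    have semY: "\<forall>y\<in>{0..1}. in_node n y \<longrightarrow> fst Y' \<le> f y \<and> f y \<le> snd Y'"
      unfolding Y'_def ab by (rule mq_sem[where a=a and b=b, OF hY x LIP RNG s q1])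
    have sem': "sem L f n ((D n)\<lparr>rng := Y'\<rparr>)" using S semY unfolding sem_def by simp
    show ?thesis using loss phiD Phi' len3 sem' U by simp
  qed
qed


lemma round_other:
  assumes P: "partn A" and p: "p \<in> A" and np: "n \<noteq> p"
    and S: "n \<in> A \<Longrightarrow> sem L f n (D n)"
  shows "Phi L n (update L T (A, D) p s) \<le> Phi L n (A, D) \<and>
         (n \<in> fst (update L T (A, D) p s) \<longrightarrow> sem L f n (snd (update L T (A, D) p s) n))"
proof (cases rule: update_cases[of D p L T A s])
  case lo then show ?thesis using np S by (simp add: Phi_def)
next
  case hi then show ?thesis using np S by (simp add: Phi_def)
next
  case ns then show ?thesis using np S by (simp add: Phi_def)
next
  case sp
  define Y' where "Y' = midpoint_query L (ilen p) (rng (D p)) s"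
  have U: "update L T (A, D) p s = (A - {p} \<union> {c0 p, c1 p}, D(p := (D p)\<lparr>rng := Y'\<rparr>, c0 p := fresh Y', c1 p := fresh Y'))"
    using sp(4) Y'_def by simp
  show ?thesis
  proof (cases "n = c0 p \<or> n = c1 p")
    case True
    have ns: "\<not> seen A n" using unseen_child[OF P p True] .
    have nA: "n \<notin> A" using ns drefl unfolding seen_def by blast
    have Dn: "(D(p := (D p)\<lparr>rng := Y'\<rparr>, c0 p := fresh Y', c1 p := fresh Y')) n = fresh Y'"
      using True by auto
    have "Phi L n (A, D) = 7/2 * L" unfolding Phi_def using ns nA by simp
    moreover have "Phi L n (update L T (A, D) p s) = 7/2 * L" unfolding U Phi_def using True Dn phi_fresh by auto
    ultimately show ?thesis unfolding U using Dn sem_fresh by simp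
  next
    case False
    have Dn: "(D(p := (D p)\<lparr>rng := Y'\<rparr>, c0 p := fresh Y', c1 p := fresh Y')) n = D n"
      using False np by auto
    have mem: "n \<in> A - {p} \<union> {c0 p, c1 p} \<longleftrightarrow> n \<in> A" using False np by auto
    have sn: "seen (A - {p} \<union> {c0 p, c1 p}) n \<longleftrightarrow> seen A n"
      using seen_mono_split[of A n p] seen_split_other[of A p n] False p by blast
    show ?thesis unfolding U Phi_def fst_conv snd_conv Dn mem sn using S by simp
  qed
qed


lemma node_total:
  assumes L: "L > 0" and X: "\<forall>t\<in>{1..T}. xs t \<in> {0..1}"
    and LIP: "\<And>y z. y\<in>{0..1} \<Longrightarrow> z\<in>{0..1} \<Longrightarrow> \<bar>f y - f z\<bar> \<le> L * \<bar>y - z\<bar>"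
    and RNG: "\<And>y. y \<in> {0..1} \<Longrightarrow> 0 \<le> f y \<and> f y \<le> L"
    and NC: "\<forall>t\<in>{1..T}. round_node L T f xs cs t = n \<longrightarrow> \<not> cs t"
  shows "m \<le> T \<Longrightarrow> (\<Sum>t\<in>{t\<in>{1..m}. round_node L T f xs cs t = n}. \<bar>f (xs t) - guess_at L T f xs cs t\<bar>)
           + Phi L n (run L T f xs cs m) \<le> 7/2 * L
         \<and> (n \<in> fst (run L T f xs cs m) \<longrightarrow> sem L f n (snd (run L T f xs cs m) n))"
proof (induction m)
  case 0
  have e: "{t\<in>{1..0::nat}. round_node L T f xs cs t = n} = {}" by simp
  show ?case unfolding e using L by (simp add: Phi_def init_state_def phi_fresh sem_fresh)
next
  case (Suc m)
  let ?S = "\<lambda>m. {t\<in>{1..m}. round_node L T f xs cs t = n}"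
  let ?g = "\<lambda>t. \<bar>f (xs t) - guess_at L T f xs cs t\<bar>"
  obtain A D where st: "run L T f xs cs m = (A, D)" by fastforce
  have IH: "sum ?g (?S m) + Phi L n (A, D) \<le> 7/2 * L" "n \<in> A \<Longrightarrow> sem L f n (D n)"
    using Suc st by auto
  have inv: "partn A" "bnds L D" using run_inv[of L T xs m f cs] L X Suc.prems st by auto
  define x where "x = xs (Suc m)"
  have x: "x \<in> {0..1}" using X Suc.prems x_def by auto
  define p where "p = node_of (A, D) x"
  have p: "p \<in> A" "in_node p x" using node_of_prop[OF inv(1) x] p_def by auto
  have rn: "round_node L T f xs cs (Suc m) = p" unfolding round_node_def p_def x_def using st by simp
  have ga: "guess_at L T f xs cs (Suc m) = guess (A, D) p" unfolding guess_at_def rn using st by simp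
  define q where "q = guess (A, D) p"
  have run': "run L T f xs cs (Suc m) = update L T (A, D) p (signal f x q (cs (Suc m)))"
    unfolding run_Suc st p_def q_def x_def ..
  have fin: "finite (?S m)" by simp
  have nin: "Suc m \<notin> ?S m" by simp
  show ?case
  proof (cases "p = n")
    case True
    have Sm: "?S (Suc m) = insert (Suc m) (?S m)" using rn True by (auto simp: le_Suc_eq)
    have ncs: "\<not> cs (Suc m)" using NC rn True Suc.prems by auto
    have sig: "signal f x q (cs (Suc m)) = (q - f x > 0)" using ncs by (simp add: signal_def)
    have LIP': "\<And>y z. y\<in>{0..1} \<Longrightarrow> z\<in>{0..1} \<Longrightarrow> in_node n y \<Longrightarrow> in_node n z \<Longrightarrow> \<bar>f y - f z\<bar> \<le> L * ilen n"
    proof -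
      fix y z assume h: "y\<in>{0..1}" "z\<in>{0..1}" "in_node n y" "in_node n z"
      have "\<bar>y - z\<bar> \<le> ilen n" using in_node_dist[OF h(3,4)] .
      then have "L * \<bar>y - z\<bar> \<le> L * ilen n" using L by (simp add: mult_left_mono)
      then show "\<bar>f y - f z\<bar> \<le> L * ilen n" using LIP[OF h(1,2)] by linarith
    qed
    have R: "\<bar>f x - q\<bar> + Phi L n (update L T (A, D) n (q - f x > 0)) \<le> phi L (D n) \<and>
         (n \<in> fst (update L T (A, D) n (q - f x > 0)) \<longrightarrow> sem L f n (snd (update L T (A, D) n (q - f x > 0)) n))"
      by (rule round_in[OF _ _ x _ inv(2) IH(2) LIP' RNG]) (use L p True q_def in auto)
    have PhiA: "Phi L n (A, D) = phi L (D n)" using p True by (simp add: Phi_def)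
    have sumS: "sum ?g (?S (Suc m)) = ?g (Suc m) + sum ?g (?S m)" unfolding Sm using fin nin by simp
    have gS: "?g (Suc m) = \<bar>f x - q\<bar>" unfolding ga x_def q_def ..
    show ?thesis unfolding run' sig sumS gS using R IH(1) PhiA True by auto
  next
    case False
    have Sm: "?S (Suc m) = ?S m" using rn False by (auto simp: le_Suc_eq)
    have R: "Phi L n (update L T (A, D) p (signal f x q (cs (Suc m)))) \<le> Phi L n (A, D) \<and>
         (n \<in> fst (update L T (A, D) p (signal f x q (cs (Suc m)))) \<longrightarrow> sem L f n (snd (update L T (A, D) p (signal f x q (cs (Suc m)))) n))"
      by (rule round_other[OF inv(1) p(1)]) (use False IH(2) in auto)
    show ?thesis unfolding run' Sm using R IH(1) by auto
  qed
qed


lemma node_bound: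
  assumes L: "L > 0" and X: "\<forall>t\<in>{1..T}. xs t \<in> {0..1}"
    and LIP: "\<And>y z. y\<in>{0..1} \<Longrightarrow> z\<in>{0..1} \<Longrightarrow> \<bar>f y - f z\<bar> \<le> L * \<bar>y - z\<bar>"
    and RNG: "\<And>y. y \<in> {0..1} \<Longrightarrow> 0 \<le> f y \<and> f y \<le> L"
    and NC: "\<forall>t\<in>{1..T}. round_node L T f xs cs t = n \<longrightarrow> \<not> cs t"
  shows "(\<Sum>t\<in>{t\<in>{1..T}. round_node L T f xs cs t = n}. \<bar>f (xs t) - guess_at L T f xs cs t\<bar>) \<le> 7/2 * L"
proof -
  have "(\<Sum>t\<in>{t\<in>{1..T}. round_node L T f xs cs t = n}. \<bar>f (xs t) - guess_at L T f xs cs t\<bar>)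
           + Phi L n (run L T f xs cs T) \<le> 7/2 * L"
    using node_total[OF L X LIP RNG NC, of T] by simp
  moreover have "Phi L n (run L T f xs cs T) \<ge> 0" using L by (simp add: Phi_nonneg)
  ultimately show ?thesis by linarith
qed

lemma parent_child: "3 < fst n \<Longrightarrow> n = c0 (parent n) \<or> n = c1 (parent n)"
  by (cases n) (auto simp: parent_def c0_def c1_def)

theorem lemma26:
  "\<exists>K::real. \<forall>(L::real) (T::nat) (C::nat) (f::real \<Rightarrow> real) (xs::nat \<Rightarrow> real) (cs::nat \<Rightarrow> bool).
     L > 0 \<longrightarrow> T \<ge> 2 \<longrightarrow> L-lipschitz_on {0..1} f \<longrightarrow> f ` {0..1} \<subseteq> {0..L}
     \<longrightarrow> (\<forall>t\<in>{1..T}. xs t \<in> {0..1}) \<longrightarrow> card {t\<in>{1..T}. cs t} \<le> C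
     \<longrightarrow> (\<Sum>t | t \<in> {1..T} \<and> correcting_node L T f xs cs (round_node L T f xs cs t).
           \<bar>f (xs t) - guess_at L T f xs cs t\<bar>) \<le> K * L * real C"
proof (intro exI allI impI)
  fix L :: real and T C :: nat and f :: "real \<Rightarrow> real" and xs :: "nat \<Rightarrow> real" and cs :: "nat \<Rightarrow> bool"
  assume L: "L > 0" and T: "T \<ge> 2" and lip: "L-lipschitz_on {0..1} f" and fr: "f ` {0..1} \<subseteq> {0..L}"
    and X: "\<forall>t\<in>{1..T}. xs t \<in> {0..1}" and Cc: "card {t\<in>{1..T}. cs t} \<le> C"
  have LIP: "\<bar>f y - f z\<bar> \<le> L * \<bar>y - z\<bar>" if "y\<in>{0..1}" "z\<in>{0..1}" for y z
    using lipschitz_onD[OF lip that] by (simp add: dist_real_def)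
  have RNG: "0 \<le> f y \<and> f y \<le> L" if "y \<in> {0..1}" for y
  proof -
    have "f y \<in> f ` {0..1}" using that by (rule imageI)
    then have "f y \<in> {0..L}" using fr by (rule subsetD[rotated])
    then show ?thesis by simp
  qed
  define rn where "rn = round_node L T f xs cs"
  define g where "g = (\<lambda>t. \<bar>f (xs t) - guess_at L T f xs cs t\<bar>)"
  define S where "S = {t. t \<in> {1..T} \<and> correcting_node L T f xs cs (rn t)}"
  have finS: "finite S" unfolding S_def by simp
  have grp: "sum g S = (\<Sum>n\<in>rn ` S. sum g {t\<in>S. rn t = n})"
    using sum.image_gen[OF finS, of g rn] .
  have each: "sum g {t\<in>S. rn t = n} \<le> 7/2 * L" if "n \<in> rn ` S" for n
  proof -
    have cn: "correcting_node L T f xs cs n" using that unfolding S_def by auto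
    have NC: "\<forall>t\<in>{1..T}. round_node L T f xs cs t = n \<longrightarrow> \<not> cs t" using cn unfolding correcting_node_def by blast
    have e: "{t\<in>S. rn t = n} = {t\<in>{1..T}. round_node L T f xs cs t = n}"
      unfolding S_def rn_def using cn by auto
    show ?thesis unfolding e g_def using node_bound[OF L X LIP RNG NC] by simp
  qed
  define Pc where "Pc = rn ` {t\<in>{1..T}. cs t}"
  have finPc: "finite Pc" unfolding Pc_def by simp
  have cardPc: "card Pc \<le> C" unfolding Pc_def using card_image_le[of "{t\<in>{1..T}. cs t}" rn] Cc by simp
  have sub: "rn ` S \<subseteq> (\<Union>p\<in>Pc. {c0 p, c1 p})"
  proof
    fix n assume "n \<in> rn ` S"
    then have cn: "correcting_node L T f xs cs n" unfolding S_def by auto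
    then have lv: "3 < fst n" and pc: "corrupted_node L T f xs cs (parent n)" unfolding correcting_node_def by auto
    from pc obtain t where "t \<in> {1..T}" "round_node L T f xs cs t = parent n" "cs t"
      unfolding corrupted_node_def by blast
    then have "parent n \<in> Pc" unfolding Pc_def rn_def by force
    then show "n \<in> (\<Union>p\<in>Pc. {c0 p, c1 p})" using parent_child[OF lv] by blast
  qed
  have "card (\<Union>p\<in>Pc. {c0 p, c1 p}) \<le> (\<Sum>p\<in>Pc. card {c0 p, c1 p})" by (rule card_UN_le[OF finPc])
  also have "\<dots> \<le> (\<Sum>p\<in>Pc. 2)" by (rule sum_mono) (simp add: card_insert_le_m1)
  also have "\<dots> = 2 * card Pc" by simp
  finally have cU: "card (\<Union>p\<in>Pc. {c0 p, c1 p}) \<le> 2 * card Pc" .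
  have "card (rn ` S) \<le> card (\<Union>p\<in>Pc. {c0 p, c1 p})" by (rule card_mono[OF _ sub]) (simp add: finPc)
  then have cS: "card (rn ` S) \<le> 2 * C" using cU cardPc by linarith
  have "sum g S \<le> real (card (rn ` S)) * (7/2 * L)"
    unfolding grp by (rule sum_bounded_above) (rule each)
  also have "\<dots> \<le> real (2 * C) * (7/2 * L)" using cS L by (intro mult_right_mono) simp_all
  also have "\<dots> = 7 * L * real C" by simp
  finally show "(\<Sum>t | t \<in> {1..T} \<and> correcting_node L T f xs cs (round_node L T f xs cs t).
           \<bar>f (xs t) - guess_at L T f xs cs t\<bar>) \<le> 7 * L * real C"
    unfolding S_def g_def rn_def .
qed

end
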